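(* Fix an integer $N \ge 1$ and any $R < \ln 2$. For each $L$, let $M = M(L) = \lceil 2^{L R/N} \rceil$ and let $K = K(L)$ be positive integers with $\lim_{L\to\infty} NK/L = \ln 2$. Draw a random codebook consisting of independent Bloom filters $B_{n,m} \sim \mathsf{BF}(L,K)$, $n = 1,\dots,N$, $m = 1,\dots,M$. Let the messages $U_1,\dots,U_N$ be independent and uniform on $\{1,\dots,M\}$, independent of the codebook; user $n$ transmits $\underline{x}_n = B_{n,U_n}$, and the receiver observes $\underline{y} = \underline{x}_1 \vee \cdots \vee \underline{x}_N$ (componentwise OR). The receiver decodes each user separately: for each $n$, if there is exactly one $m$ such that $B_{n,m}$ is contained in $\underline{y}$ (i.e., $B_{n,m} \le \underline{y}$ componentwise), it outputs $\hat{U}_n = m$; otherwise it declares an error. Then the probability (over codebook and messages) that $\hat{U}_n = U_n$ for all $n$ tends to $1$ as $L \to \infty$. Consequently, without joint decoding, Bloom filter channel inputs achieve the symmetric sum rate $\ln 2$ bits per channel use on the $N$-user OR multiple-access channel, for any fixed $N$.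
   Context: The $N$-user OR multiple-access channel has binary inputs and output equal to their Boolean OR, used memorylessly; here a block of $L$ channel uses carries one length-$L$ array per user. A Bloom filter $\mathsf{BF}(L, K)$ is the random binary array in $\{0,1\}^L$ obtained by starting from the all-zero array and letting $K$ hash functions each independently select a uniformly random position in $\{1,\dots,L\}$ and set it to $1$. The sum rate is $N \log_2 M / L$ bits per channel use, each user having rate $\log_2 M / L$. *)

theory Defs
  imports "HOL-Probability.Probability"
begin

text \<open>Binary arrays of length L are represented by the set of positions (in
  {0..<L}) carrying a 1.  Componentwise OR is union, componentwise
  order (containment) is subset.\<close>

definition bloom_filter :: "nat \<Rightarrow> nat \<Rightarrow> nat set pmf" where
  "bloom_filter L K =
     map_pmf (\<lambda>h. h ` {..<K}) (Pi_pmf {..<K} 0 (\<lambda>_. pmf_of_set {..<L}))"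

definition bloom_codebook :: "nat \<Rightarrow> nat \<Rightarrow> nat \<Rightarrow> nat \<Rightarrow> (nat \<times> nat \<Rightarrow> nat set) pmf" where
  "bloom_codebook N M L K = Pi_pmf ({..<N} \<times> {..<M}) {} (\<lambda>_. bloom_filter L K)"

definition message_dist :: "nat \<Rightarrow> nat \<Rightarrow> (nat \<Rightarrow> nat) pmf" where
  "message_dist N M = Pi_pmf {..<N} 0 (\<lambda>_. pmf_of_set {..<M})"

definition or_output :: "nat \<Rightarrow> (nat \<times> nat \<Rightarrow> nat set) \<Rightarrow> (nat \<Rightarrow> nat) \<Rightarrow> nat set" where
  "or_output N C U = (\<Union>n\<in>{..<N}. C (n, U n))"

definition decodes_correctly :: "nat \<Rightarrow> (nat \<times> nat \<Rightarrow> nat set) \<Rightarrow> nat set \<Rightarrow> nat \<Rightarrow> nat \<Rightarrow> bool" where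
  "decodes_correctly M C y n u \<longleftrightarrow> {m \<in> {..<M}. C (n, m) \<subseteq> y} = {u}"

definition success_prob :: "nat \<Rightarrow> nat \<Rightarrow> nat \<Rightarrow> nat \<Rightarrow> real" where
  "success_prob N M L K =
     measure_pmf.prob (pair_pmf (bloom_codebook N M L K) (message_dist N M))
       {(C, U). \<forall>n<N. decodes_correctly M C (or_output N C U) n (U n)}"

end

theory Submission
  imports Defs "HOL-Real_Asymp.Real_Asymp"
begin

lemma bloom_subset:
  assumes "L > 0"
  shows "measure_pmf.prob (bloom_filter L K) {B. B \<subseteq> W} = (real (card ({..<L} \<inter> W)) / real L) ^ K"
proof -
  have "(\<lambda>h. h ` {..<K}) -` {B. B \<subseteq> W} = Pi {..<K} (\<lambda>_. W)" by auto
  then show ?thesis using assms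
    by (simp add: bloom_filter_def measure_Pi_pmf_Pi measure_pmf_of_set[of "{..<L}"] lessThan_empty_iff)
qed

lemma avoid_prob:
  assumes "finite I" "S \<subseteq> I" "L > 0"
  shows "measure_pmf.prob (Pi_pmf I {} (\<lambda>_. bloom_filter L K)) {C. \<forall>s\<in>S. C s \<inter> X = {}}
       = (real (card ({..<L} - X)) / real L) ^ (K * card S)"
proof -
  have eq: "{C. \<forall>s\<in>S. C s \<inter> X = {}} = Pi I (\<lambda>i. if i \<in> S then {B. B \<subseteq> -X} else UNIV)"
    using assms(2) by (auto simp: Pi_def)
  have d: "{..<L} \<inter> - X = {..<L} - X" by auto
  have "measure_pmf.prob (Pi_pmf I {} (\<lambda>_. bloom_filter L K)) {C. \<forall>s\<in>S. C s \<inter> X = {}}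
     = (\<Prod>i\<in>I. measure_pmf.prob (bloom_filter L K) (if i \<in> S then {B. B \<subseteq> -X} else UNIV))"
    unfolding eq using assms(1) by (simp add: measure_Pi_pmf_Pi)
  also have "\<dots> = (\<Prod>i\<in>I. if i \<in> S then (real (card ({..<L} - X)) / real L) ^ K else 1)"
    using assms(3) by (intro prod.cong) (auto simp: bloom_subset d)
  also have "\<dots> = ((real (card ({..<L} - X)) / real L) ^ K) ^ card S"
    using assms(1,2) by (simp add: prod.If_cases Int_absorb1 Int_def[symmetric] inf.absorb2)
  finally show ?thesis by (simp add: power_mult)
qed

lemma card_diff_sum: "real (card ({..<L::nat} - U)) = (\<Sum>x<L. if x \<in> U then 0 else 1)"
  by (simp add: sum.If_cases Diff_eq)

lemma tail:
  fixes K L :: nat and I :: "'i set"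
  assumes fin: "finite I" and SI: "S \<subseteq> I" and L0: "L > 0" and t0: "t > 0"
  defines "P \<equiv> Pi_pmf I {} (\<lambda>_. bloom_filter L K)"
  defines "Z \<equiv> \<lambda>C. real (card ({..<L} - (\<Union>s\<in>S. C s)))"
  defines "p1 \<equiv> (real (L-1) / real L) ^ (K * card S)"
  shows "measure_pmf.prob P {C. t \<le> \<bar>Z C - real L * p1\<bar>} \<le> real L / t^2"
proof -
  define A :: "nat set \<Rightarrow> ('i \<Rightarrow> nat set) set" where "A = (\<lambda>X. {C. \<forall>s\<in>S. C s \<inter> X = {}})"
  have hZ: "Z C = (\<Sum>x<L. indicator (A {x}) C)" for C
    unfolding Z_def card_diff_sum A_def by (intro sum.cong) (auto simp: indicator_def)
  have hZ2: "(Z C)^2 = (\<Sum>x<L. \<Sum>y<L. indicator (A {x,y}) C)" for C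
  proof -
    have "(Z C)^2 = (\<Sum>x<L. \<Sum>y<L. indicator (A {x}) C * indicator (A {y}) C)"
      unfolding hZ power2_eq_square sum_product ..
    also have "\<dots> = (\<Sum>x<L. \<Sum>y<L. indicator (A {x,y}) C)"
      by (intro sum.cong refl) (auto simp: indicator_def A_def)
    finally show ?thesis .
  qed
  have hZf: "Z = (\<lambda>C. \<Sum>x<L. indicator (A {x}) C)" using hZ by auto
  have intg: "integrable (measure_pmf P) (\<lambda>C. indicator (A X) C :: real)" for X
    by (rule measure_pmf.integrable_const_bound[where B=1]) (auto simp: indicator_def)
  have pA: "measure_pmf.prob P (A X) = (real (card ({..<L} - X)) / real L) ^ (K * card S)" for X
    unfolding P_def A_def using avoid_prob[OF fin SI L0] .
  have EZ: "measure_pmf.expectation P Z = real L * p1"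
  proof -
    have "measure_pmf.expectation P Z = (\<Sum>x<L. measure_pmf.expectation P (indicator (A {x})))"
      unfolding hZf by (simp add: intg)
    also have "\<dots> = (\<Sum>x<L. p1)"
    proof (intro sum.cong refl)
      fix x assume "x \<in> {..<L}"
      then have "card ({..<L} - {x}) = L - 1" by simp
      then show "measure_pmf.expectation P (indicator (A {x})) = p1"
        using pA[of "{x}"] by (simp add: p1_def)
    qed
    finally show ?thesis by simp
  qed
  define p2 where "p2 = (real (L-2) / real L) ^ (K * card S)"
  have p1le: "p1 \<le> 1" and p10: "0 \<le> p1" unfolding p1_def using L0
    by (auto intro!: power_le_one divide_le_eq_1_pos[THEN iffD2])
  have p2le: "p2 \<le> p1^2"
  proof -
    have "real (L-2) / real L \<le> (real (L-1) / real L)^2"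
      using L0 by (cases "L \<ge> 2") (auto simp: field_simps power2_eq_square of_nat_diff)
    then have "p2 \<le> ((real (L-1) / real L)^2) ^ (K * card S)"
      unfolding p2_def by (intro power_mono) auto
    then show ?thesis by (simp add: p1_def power_mult[symmetric] mult.commute)
  qed
  have p20: "0 \<le> p2" unfolding p2_def by simp
  have EZ2: "measure_pmf.expectation P (\<lambda>C. (Z C)^2) \<le> real L * p1 + real L ^ 2 * p2"
  proof -
    have "measure_pmf.expectation P (\<lambda>C. (Z C)^2) = (\<Sum>x<L. \<Sum>y<L. measure_pmf.prob P (A {x,y}))"
      unfolding hZ2 by (simp add: intg)
    also have "\<dots> \<le> (\<Sum>x<L. p1 + real L * p2)"
    proof (intro sum_mono)
      fix x assume x: "x \<in> {..<L}"
      have "(\<Sum>y<L. measure_pmf.prob P (A {x,y})) = measure_pmf.prob P (A {x,x}) + (\<Sum>y\<in>{..<L}-{x}. measure_pmf.prob P (A {x,y}))"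
        using x by (subst sum.remove[of _ x]) auto
      also have "\<dots> = p1 + (\<Sum>y\<in>{..<L}-{x}. p2)"
      proof (intro arg_cong2[where f="(+)"] sum.cong refl)
        have "card ({..<L} - {x}) = L - 1" using x by simp
        then show "measure_pmf.prob P (A {x,x}) = p1" using pA[of "{x,x}"] by (simp add: p1_def)
      next
        fix y assume y: "y \<in> {..<L} - {x}"
        have "{..<L} - {x,y} = ({..<L} - {x}) - {y}" by auto
        then have "card ({..<L} - {x,y}) = L - 2" using x y by (simp add: card_Diff_singleton)
        then show "measure_pmf.prob P (A {x,y}) = p2" using pA[of "{x,y}"] by (simp add: p2_def)
      qed
      also have "\<dots> \<le> p1 + real L * p2"
        using x p20 by (simp add: mult_right_mono)
      finally show "(\<Sum>y<L. measure_pmf.prob P (A {x,y})) \<le> p1 + real L * p2" .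
    qed
    also have "\<dots> = real L * p1 + real L ^ 2 * p2" by (simp add: algebra_simps power2_eq_square)
    finally show ?thesis .
  qed
  have bZ: "norm (Z C) \<le> real L" for C
    unfolding Z_def by (simp add: card_mono[of "{..<L}", simplified] card_Diff_subset)
  have iZ: "integrable (measure_pmf P) Z"
    by (rule measure_pmf.integrable_const_bound[where B="real L"]) (use bZ in auto)
  have iZ2: "integrable (measure_pmf P) (\<lambda>C. (Z C)^2)"
  proof (rule measure_pmf.integrable_const_bound[where B="real L ^ 2"])
    show "AE C in measure_pmf P. norm ((Z C)^2) \<le> real L ^ 2"
    proof (rule AE_I2)
      fix C have "0 \<le> Z C" unfolding Z_def by simp
      then show "norm ((Z C)^2) \<le> real L ^ 2" using bZ[of C] by (simp add: power_mono)
    qed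
  qed auto
  have var: "measure_pmf.variance P Z \<le> real L"
  proof -
    have "measure_pmf.variance P Z = measure_pmf.expectation P (\<lambda>C. (Z C)^2) - (real L * p1)^2"
      using measure_pmf.variance_eq[OF iZ iZ2] EZ by simp
    also have "\<dots> \<le> real L * p1 + real L ^ 2 * p2 - (real L * p1)^2" using EZ2 by simp
    also have "\<dots> \<le> real L * p1" using p2le by (simp add: power_mult_distrib mult_left_mono)
    also have "\<dots> \<le> real L" using p1le by (simp add: mult_left_le)
    finally show ?thesis .
  qed
  have "measure_pmf.prob P {C \<in> space (measure_pmf P). t \<le> \<bar>Z C - measure_pmf.expectation P Z\<bar>}
      \<le> measure_pmf.variance P Z / t^2"
    by (rule measure_pmf.Chebyshev_inequality) (auto intro: iZ2 t0)
  then show ?thesis using var t0 EZ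
    by (auto elim!: order_trans intro!: divide_right_mono)
qed

lemma pair_bound:
  fixes c :: real
  assumes "\<And>y. y \<in> set_pmf q \<Longrightarrow> measure_pmf.prob p {x. (x,y) \<in> E} \<le> c"
  shows "measure_pmf.prob (pair_pmf p q) E \<le> c"
proof -
  obtain y0 where "y0 \<in> set_pmf q" using set_pmf_not_empty[of q] by blast
  hence c0: "c \<ge> 0" using assms[of y0] measure_nonneg order_trans by metis
  have eq: "pair_pmf p q = bind_pmf q (\<lambda>y. map_pmf (\<lambda>x. (x,y)) p)"
    unfolding pair_pmf_def map_pmf_def by (subst bind_commute_pmf) (simp add: o_def)
  have "emeasure (measure_pmf (pair_pmf p q)) E = (\<integral>\<^sup>+y. emeasure (measure_pmf (map_pmf (\<lambda>x. (x,y)) p)) E \<partial>q)"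
    unfolding eq by simp
  also have "\<dots> \<le> (\<integral>\<^sup>+y. ennreal c \<partial>q)"
  proof (rule nn_integral_mono_AE)
    show "AE y in measure_pmf q. emeasure (measure_pmf (map_pmf (\<lambda>x. (x, y)) p)) E \<le> ennreal c"
    proof (rule AE_pmfI)
      fix y assume y: "y \<in> set_pmf q"
      have "emeasure (measure_pmf (map_pmf (\<lambda>x. (x, y)) p)) E = emeasure (measure_pmf p) {x. (x,y) \<in> E}"
        by (simp add: vimage_def)
      also have "\<dots> = ennreal (measure_pmf.prob p {x. (x,y) \<in> E})"
        by (simp add: measure_pmf.emeasure_eq_measure)
      also have "\<dots> \<le> ennreal c" using assms[OF y] by (simp add: ennreal_leI)
      finally show "emeasure (measure_pmf (map_pmf (\<lambda>x. (x, y)) p)) E \<le> ennreal c" .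
    qed
  qed
  also have "\<dots> = ennreal c" by simp
  finally show ?thesis
    using c0 by (simp add: measure_pmf.emeasure_eq_measure)
qed


lemma competitor:
  fixes K L :: nat and I :: "'i set" and a :: real
  assumes fin: "finite I" and j: "j \<in> I" and SI: "S \<subseteq> I - {j}" and L0: "L > 0" and a0: "0 \<le> a"
  shows "measure_pmf.prob (Pi_pmf I {} (\<lambda>_. bloom_filter L K))
     {C. C j \<subseteq> (\<Union>s\<in>S. C s) \<and> real (card ({..<L} \<inter> (\<Union>s\<in>S. C s))) \<le> a * real L} \<le> a ^ K"
proof -
  let ?E = "{C. C j \<subseteq> (\<Union>s\<in>S. C s) \<and> real (card ({..<L} \<inter> (\<Union>s\<in>S. C s))) \<le> a * real L}"
  have Ieq: "I = insert j (I - {j})" using j by auto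
  have P: "Pi_pmf I {} (\<lambda>_. bloom_filter L K) = map_pmf (\<lambda>(y,f). f(j:=y))
      (pair_pmf (bloom_filter L K) (Pi_pmf (I - {j}) {} (\<lambda>_. bloom_filter L K)))"
    by (subst Ieq, rule Pi_pmf_insert) (use fin in auto)
  show ?thesis unfolding P measure_map_pmf
  proof (rule pair_bound)
    fix f
    have Sj: "s \<in> S \<Longrightarrow> s \<noteq> j" for s using SI by auto
    have "{y. (y, f) \<in> (\<lambda>(y, f). f(j := y)) -` ?E} =
       {y. y \<subseteq> (\<Union>s\<in>S. f s) \<and> real (card ({..<L} \<inter> (\<Union>s\<in>S. f s))) \<le> a * real L}"
      using Sj by auto
    also have "measure_pmf.prob (bloom_filter L K) \<dots> \<le> a ^ K"
    proof (cases "real (card ({..<L} \<inter> (\<Union>s\<in>S. f s))) \<le> a * real L")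
      case True
      have "measure_pmf.prob (bloom_filter L K) {y. y \<subseteq> (\<Union>s\<in>S. f s) \<and> real (card ({..<L} \<inter> (\<Union>s\<in>S. f s))) \<le> a * real L}
          = (real (card ({..<L} \<inter> (\<Union>s\<in>S. f s))) / real L) ^ K"
        using True by (simp add: bloom_subset[OF L0])
      also have "\<dots> \<le> a ^ K"
        using True L0 by (intro power_mono) (auto simp: field_simps)
      finally show ?thesis .
    qed (use a0 in simp)
    finally show "measure_pmf.prob (bloom_filter L K) {y. (y, f) \<in> (\<lambda>(y, f). f(j := y)) -` ?E} \<le> a ^ K" .
  qed
qed

lemma fail_bound:
  fixes N M L K :: nat and a t :: real
  assumes M0: "M > 0" and L0: "L > 0" and a0: "0 \<le> a" and t0: "t > 0"
    and tle: "t \<le> real L * (real (L-1) / real L) ^ (K * N) - (1 - a) * real L"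
  shows "1 - success_prob N M L K \<le> real L / t^2 + real N * real M * a ^ K"
proof -
  define E where "E = {(C, U). \<forall>n<N. decodes_correctly M C (or_output N C U) n (U n)}"
  define I where "I = {..<N} \<times> {..<M}"
  have finI: "finite I" unfolding I_def by simp
  have "1 - success_prob N M L K = measure_pmf.prob (pair_pmf (bloom_codebook N M L K) (message_dist N M)) (- E)"
    unfolding success_prob_def E_def by (simp add: measure_pmf.prob_compl[symmetric] Compl_eq_Diff_UNIV)
  also have "\<dots> \<le> real L / t^2 + real N * real M * a ^ K"
  proof (rule pair_bound)
    fix u assume u: "u \<in> set_pmf (message_dist N M)"
    have uM: "k < N \<Longrightarrow> u k < M" for k
    proof -
      assume k: "k < N"
      have "u \<in> PiE_dflt {..<N} 0 (set_pmf \<circ> (\<lambda>_. pmf_of_set {..<M}))"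
        using u set_Pi_pmf_subset'[of "{..<N}" 0 "\<lambda>_. pmf_of_set {..<M}"] unfolding message_dist_def by auto
      then show ?thesis using k M0 by (auto simp: PiE_dflt_def lessThan_empty_iff)
    qed
    define S where "S = (\<lambda>k. (k, u k)) ` {..<N}"
    have SI: "S \<subseteq> I" unfolding S_def I_def using uM by auto
    have cardS: "card S = N" unfolding S_def by (subst card_image) (auto simp: inj_on_def)
    define Y where "Y = (\<lambda>C::nat\<times>nat \<Rightarrow> nat set. \<Union>s\<in>S. C s)"
    have Yor: "or_output N C u = Y C" for C unfolding or_output_def Y_def S_def by auto
    define P where "P = Pi_pmf I {} (\<lambda>_. bloom_filter L K)"
    define p1 where "p1 = (real (L-1) / real L) ^ (K * card S)"
    define Z where "Z = (\<lambda>C::nat\<times>nat \<Rightarrow> nat set. real (card ({..<L} - Y C)))"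
    define Bad where "Bad = {C. a * real L < real (card ({..<L} \<inter> Y C))}"
    define G where "G = (\<lambda>j. {C. C j \<subseteq> Y C \<and> real (card ({..<L} \<inter> Y C)) \<le> a * real L})"
    have sub: "{C. (C, u) \<in> - E} \<subseteq> Bad \<union> (\<Union>j\<in>I - S. G j)"
    proof
      fix C assume "C \<in> {C. (C, u) \<in> - E}"
      then obtain n where n: "n < N" and nd: "\<not> decodes_correctly M C (Y C) n (u n)"
        unfolding E_def by (auto simp: Yor)
      have un: "u n \<in> {m \<in> {..<M}. C (n, m) \<subseteq> Y C}"
        using uM[OF n] n unfolding Y_def S_def by auto
      then obtain m where m: "m < M" "m \<noteq> u n" "C (n, m) \<subseteq> Y C"
        using nd unfolding decodes_correctly_def by blast
      have "(n, m) \<in> I - S" using m n unfolding I_def S_def by auto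
      then show "C \<in> Bad \<union> (\<Union>j\<in>I - S. G j)"
        using m unfolding Bad_def G_def by auto
    qed
    have Bad_sub: "Bad \<subseteq> {C. t \<le> \<bar>Z C - real L * p1\<bar>}"
    proof
      fix C assume "C \<in> Bad"
      hence b: "a * real L < real (card ({..<L} \<inter> Y C))" unfolding Bad_def by simp
      have "card ({..<L} - Y C) + card ({..<L} \<inter> Y C) = L"
        using card_Int_Diff[of "{..<L}" "Y C"] by (simp add: Diff_eq)
      hence "Z C = real L - real (card ({..<L} \<inter> Y C))" unfolding Z_def by linarith
      then show "C \<in> {C. t \<le> \<bar>Z C - real L * p1\<bar>}"
        using b tle unfolding p1_def cardS by (auto simp: algebra_simps)
    qed
    have "measure_pmf.prob P {C. (C, u) \<in> - E} \<le> measure_pmf.prob P (Bad \<union> (\<Union>j\<in>I - S. G j))"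
      by (rule measure_pmf.finite_measure_mono[OF sub]) simp
    also have "\<dots> \<le> measure_pmf.prob P Bad + measure_pmf.prob P (\<Union>j\<in>I - S. G j)"
      by (rule measure_Un_le) auto
    also have "measure_pmf.prob P (\<Union>j\<in>I - S. G j) \<le> (\<Sum>j\<in>I - S. measure_pmf.prob P (G j))"
      by (rule measure_pmf.finite_measure_subadditive_finite) (use finI in auto)
    also have "\<dots> \<le> (\<Sum>j\<in>I - S. a ^ K)"
    proof (rule sum_mono)
      fix j assume j: "j \<in> I - S"
      show "measure_pmf.prob P (G j) \<le> a ^ K"
        unfolding P_def G_def Y_def
        by (rule competitor[OF finI]) (use j SI L0 a0 in auto)
    qed
    also have "\<dots> \<le> real N * real M * a ^ K"
    proof -
      have "card (I - S) \<le> card I" using finI by (intro card_mono) auto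
      also have "card I = N * M" unfolding I_def by (simp add: card_cartesian_product)
      finally have "card (I - S) \<le> N * M" .
      then have "real (card (I - S)) \<le> real N * real M" by (metis of_nat_le_iff of_nat_mult)
      then show ?thesis using a0 by (simp add: mult_right_mono)
    qed
    also have "measure_pmf.prob P Bad \<le> real L / t^2"
    proof -
      have "measure_pmf.prob P Bad \<le> measure_pmf.prob P {C. t \<le> \<bar>Z C - real L * p1\<bar>}"
        by (rule measure_pmf.finite_measure_mono[OF Bad_sub]) simp
      also have "\<dots> \<le> real L / t^2"
        unfolding P_def Z_def Y_def p1_def by (rule tail[OF finI SI L0 t0])
      finally show ?thesis .
    qed
    finally show "measure_pmf.prob (bloom_codebook N M L K) {C. (C, u) \<in> - E} \<le> real L / t^2 + real N * real M * a ^ K"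
      unfolding P_def bloom_codebook_def I_def by simp
  qed
  finally show ?thesis .
qed

lemma expneg:
  fixes c :: "nat \<Rightarrow> real"
  assumes "c \<longlonglongrightarrow> c0" "c0 < 0"
  shows "(\<lambda>L. exp (real L * c L)) \<longlonglongrightarrow> 0"
proof (rule tendsto_sandwich[where f="\<lambda>_. 0" and h="\<lambda>L. exp (real L * (c0/2))"])
  have "eventually (\<lambda>L. c L < c0/2) sequentially"
    using order_tendstoD(2)[OF assms(1), of "c0/2"] assms(2) by simp
  then show "eventually (\<lambda>L. exp (real L * c L) \<le> exp (real L * (c0/2))) sequentially"
  proof eventually_elim
    case (elim L)
    have "real L * c L \<le> real L * (c0/2)" using elim by (intro mult_left_mono) auto
    then show ?case by simp
  qed
  show "eventually (\<lambda>L. 0 \<le> exp (real L * c L)) sequentially" by simp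
  show "(\<lambda>L. exp (real L * (c0 / 2))) \<longlonglongrightarrow> 0" using assms(2) by real_asymp
qed simp

lemma qlim:
  fixes r :: "nat \<Rightarrow> real" and T :: "nat \<Rightarrow> nat"
  assumes "(\<lambda>L. real (T L) / real L) \<longlonglongrightarrow> ln 2"
  shows "(\<lambda>L. (real (L-1) / real L) ^ T L) \<longlonglongrightarrow> 1/2"
proof -
  have g: "(\<lambda>L. real L * ln (1 - 1 / real L)) \<longlonglongrightarrow> -1" by real_asymp
  have "(\<lambda>L. exp (real (T L) / real L * (real L * ln (1 - 1 / real L)))) \<longlonglongrightarrow> exp (ln 2 * -1)"
    by (intro tendsto_intros assms g)
  also have "exp (ln 2 * -1) = (1/2 :: real)" by (simp add: exp_minus)
  finally have lim: "(\<lambda>L. exp (real (T L) / real L * (real L * ln (1 - 1 / real L)))) \<longlonglongrightarrow> 1/2" .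
  have ev: "eventually (\<lambda>L. exp (real (T L) / real L * (real L * ln (1 - 1 / real L))) = (real (L-1) / real L) ^ T L) sequentially"
    using eventually_ge_at_top[of 2]
  proof eventually_elim
    case (elim L)
    have pos: "0 < 1 - 1 / real L" using elim by (simp add: field_simps)
    have eq: "1 - 1 / real L = real (L-1) / real L" using elim by (simp add: field_simps of_nat_diff)
    have "exp (real (T L) / real L * (real L * ln (1 - 1 / real L))) = exp (real (T L) * ln (1 - 1/ real L))"
      using elim by simp
    also have "\<dots> = (1 - 1 / real L) ^ T L" using pos by (simp add: exp_ln ln_realpow[symmetric])
    finally show ?case by (simp add: eq)
  qed
  show ?thesis using Lim_transform_eventually[OF lim ev] .
qed

theorem proposition2:
  fixes N :: nat and R :: real and M K :: "nat \<Rightarrow> nat"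
  assumes "N \<ge> 1"
    and "R < ln 2"
    and "\<And>L. M L = nat \<lceil>2 powr (real L * R / real N)\<rceil>"
    and "\<And>L. K L > 0"
    and "(\<lambda>L. real N * real (K L) / real L) \<longlonglongrightarrow> ln 2"
  shows "(\<lambda>L. success_prob N (M L) L (K L)) \<longlonglongrightarrow> 1"
proof -
  note N1 = assms(1) and RL = assms(2) and Mdef = assms(3) and rlim = assms(5)
  have Npos: "real N > 0" using N1 by simp
  define r where "r = (\<lambda>L. real N * real (K L) / real L)"
  define a where "a = (1/2 + min 1 (exp (-R))) / 2"
  have "exp (- ln 2) < exp (-R)" using RL by simp
  hence eR: "1/2 < exp (-R)" by (simp add: exp_minus)
  have a12: "1/2 < a" and a1: "a < 1" and aR: "a < exp (-R)" and a0: "0 < a"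
  proof -
    have m1: "1/2 < min 1 (exp (-R))" and m2: "min 1 (exp (-R)) \<le> 1" and m3: "min 1 (exp (-R)) \<le> exp (-R)"
      using eR by auto
    show "1/2 < a" "0 < a" using m1 unfolding a_def by auto
    show "a < 1" "a < exp (-R)" using m1 m2 m3 unfolding a_def by auto
  qed
  have lna: "ln a < -R" using aR a0 by (metis ln_exp ln_less_cancel_iff exp_gt_zero)
  have lna0: "ln a < 0" using a1 a0 by simp
  define \<delta> where "\<delta> = (a - 1/2) / 2"
  have d0: "\<delta> > 0" unfolding \<delta>_def using a12 by simp
  define q where "q = (\<lambda>L. (real (L-1) / real L) ^ (K L * N))"
  have "(\<lambda>L. real (K L * N) / real L) \<longlonglongrightarrow> ln 2"
    using rlim by (simp add: mult.commute)
  hence qlim': "q \<longlonglongrightarrow> 1/2" unfolding q_def by (rule qlim)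
  have evq: "eventually (\<lambda>L. 1 - a + \<delta> < q L) sequentially"
    by (rule order_tendstoD(1)[OF qlim']) (use a12 in \<open>simp add: \<delta>_def field_simps\<close>)
  define c1 where "c1 = (\<lambda>L. R * ln 2 / real N + r L * ln a / real N)"
  define c2 where "c2 = (\<lambda>L. r L * ln a / real N)"
  define e where "e = (\<lambda>L. 1 / (\<delta>^2 * real L) + real N * (exp (real L * c1 L) + exp (real L * c2 L)))"
  have c1lim: "c1 \<longlonglongrightarrow> R * ln 2 / real N + ln 2 * ln a / real N"
    unfolding c1_def r_def by (intro tendsto_intros rlim) (use Npos in auto)
  have c1neg: "R * ln 2 / real N + ln 2 * ln a / real N < 0"
  proof -
    have "ln 2 * (R + ln a) < 0" using lna by (simp add: mult_pos_neg)
    then show ?thesis using Npos by (simp add: field_simps)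
  qed
  have c2lim: "c2 \<longlonglongrightarrow> ln 2 * ln a / real N"
    unfolding c2_def r_def by (intro tendsto_intros rlim) (use Npos in auto)
  have c2neg: "ln 2 * ln a / real N < 0" using lna0 Npos by (simp add: divide_neg_pos mult_pos_neg)
  have elim: "e \<longlonglongrightarrow> 0"
  proof -
    have "(\<lambda>L. 1 / (\<delta>^2 * real L)) \<longlonglongrightarrow> 0" using d0 by real_asymp
    moreover have "(\<lambda>L. real N * (exp (real L * c1 L) + exp (real L * c2 L))) \<longlonglongrightarrow> real N * (0 + 0)"
      by (intro tendsto_intros expneg[OF c1lim c1neg] expneg[OF c2lim c2neg])
    ultimately show ?thesis unfolding e_def using tendsto_add by fastforce
  qed
  have lower: "eventually (\<lambda>L. 1 - e L \<le> success_prob N (M L) L (K L)) sequentially"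
    using evq eventually_ge_at_top[of 1]
  proof eventually_elim
    case (elim L)
    have L0: "L > 0" using elim by simp
    have "2 powr (real L * R / real N) > 0" by simp
    hence M0: "M L > 0" unfolding Mdef by simp
    have tle: "\<delta> * real L \<le> real L * (real (L-1) / real L) ^ (K L * N) - (1 - a) * real L"
    proof -
      have "(1 - a + \<delta>) * real L \<le> q L * real L" using elim(1) L0 by (intro mult_right_mono) auto
      then show ?thesis unfolding q_def by (simp add: algebra_simps)
    qed
    have fb: "1 - success_prob N (M L) L (K L) \<le> real L / (\<delta> * real L)^2 + real N * real (M L) * a ^ K L"
      by (rule fail_bound[OF M0 L0 _ _ tle]) (use a0 d0 L0 in auto)
    have t1: "real L / (\<delta> * real L)^2 = 1 / (\<delta>^2 * real L)"
      using L0 d0 by (simp add: field_simps power2_eq_square)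
    have aK: "a ^ K L = exp (real L * c2 L)"
    proof -
      have "real L * c2 L = real (K L) * ln a" unfolding c2_def r_def using L0 Npos by (simp add: field_simps)
      then show ?thesis using a0 by (simp add: exp_of_nat_mult)
    qed
    have pK: "2 powr (real L * R / real N) * a ^ K L = exp (real L * c1 L)"
    proof -
      have "real L * c1 L = real L * R / real N * ln 2 + real (K L) * ln a"
        unfolding c1_def r_def using L0 Npos by (simp add: field_simps)
      then show ?thesis using a0 by (simp add: exp_of_nat_mult exp_add powr_def)
    qed
    have Mle: "real (M L) \<le> 2 powr (real L * R / real N) + 1"
    proof -
      let ?x = "2 powr (real L * R / real N)"
      have "0 < ?x" by simp
      then have "0 \<le> \<lceil>?x\<rceil>" by (metis ceiling_mono ceiling_zero less_imp_le)
      then have "real (nat \<lceil>?x\<rceil>) = real_of_int \<lceil>?x\<rceil>" by simp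
      also have "\<dots> \<le> ?x + 1" by (rule of_int_ceiling_le_add_one)
      finally show ?thesis unfolding Mdef .
    qed
    have "real (M L) * a ^ K L \<le> (2 powr (real L * R / real N) + 1) * a ^ K L"
      using Mle a0 by (simp add: mult_right_mono)
    also have "\<dots> = exp (real L * c1 L) + exp (real L * c2 L)"
      using pK aK by (simp add: distrib_right)
    finally have "real N * real (M L) * a ^ K L \<le> real N * (exp (real L * c1 L) + exp (real L * c2 L))"
      by (simp add: mult.assoc mult_left_mono)
    then show ?case using fb t1 unfolding e_def by linarith
  qed
  have upper: "eventually (\<lambda>L. success_prob N (M L) L (K L) \<le> 1) sequentially"
    by (simp add: success_prob_def)
  have "(\<lambda>L. 1 - e L) \<longlonglongrightarrow> 1 - 0" by (intro tendsto_intros elim)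
  then show ?thesis using tendsto_sandwich[OF lower upper] by simp
qed

end
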